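(* Let $m\geq 7$ be an integer. Then for every prime $p$ of the form $p=4m^2n+1$ with $n$ a positive integer, we have $d_m(\mathbb{Z}/p\mathbb{Z})\geq \frac18\left(1-\frac1p\right)$. In particular, $d_m\geq\frac18$.
   Context: For a positive integer $m$, a subset $A$ of an abelian group is $m$-sum-free if there is no triple $(x,y,z)\in A^3$ with $x+y=mz$. For a prime $p$, $d_m(\mathbb{Z}/p\mathbb{Z})=\max\{|A|/p : A\subseteq \mathbb{Z}/p\mathbb{Z}\ \text{is } m\text{-sum-free}\}$. For $m\ge 3$ it is known (from prior work) that $d_m(\mathbb{Z}/p\mathbb{Z})$ converges as $p\to\infty$ through primes; $d_m$ denotes this limit. *)

theory Defs
  imports Complex_Main "HOL-Computational_Algebra.Primes"
begin

text \<open>Elements of Z/pZ are represented by the residues 0..p-1 (as naturals).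
  A subset A of Z/pZ is m-sum-free if there is no triple (x,y,z) in A^3 with
  x + y = m z in Z/pZ.\<close>

definition m_sum_free_mod :: "nat \<Rightarrow> nat \<Rightarrow> nat set \<Rightarrow> bool" where
  "m_sum_free_mod m p A \<longleftrightarrow>
     A \<subseteq> {..<p} \<and>
     (\<forall>x\<in>A. \<forall>y\<in>A. \<forall>z\<in>A. (x + y) mod p \<noteq> (m * z) mod p)"

definition d_mod :: "nat \<Rightarrow> nat \<Rightarrow> real" where
  "d_mod m p = Max ((\<lambda>A. real (card A) / real p) ` {A. m_sum_free_mod m p A})"

definition primes_at_top :: "nat filter" where
  "primes_at_top = inf sequentially (principal {p. prime p})"

end

theory Submission
  imports Defs
begin


lemma mod_neq_aux:
  fixes a b p :: int
  assumes "a < b" "b < a + p" shows "a mod p \<noteq> b mod p"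
proof
  assume "a mod p = b mod p"
  then have "p dvd (b - a)" by (metis mod_eq_dvd_iff)
  moreover have "0 < b - a" "b - a < p" using assms by auto
  ultimately show False using zdvd_imp_le by fastforce
qed

lemma construct:
  fixes m p g e q s c0 :: nat
  assumes eq: "m*g + e = p"
    and A1: "2*(c0+s-1) + 2*g*(q-1) + e*(q-1) < m*c0"
    and A2: "m*(c0+s-1) < 2*c0 + p"
    and A3: "s \<le> g" and A4: "s - 1 + g*(q-1) < p" and s1: "s \<ge> 1" and q1: "q \<ge> 1"
  defines "A \<equiv> (\<lambda>(c,k). (c + g*k) mod p) ` ({c0..<c0+s} \<times> {..<q})"
  shows "m_sum_free_mod m p A \<and> card A = q*s"
proof
  have p0: "p > 0" using A4 by auto
  obtain s' q' where ss: "s = s'+1" "q = q'+1" using s1 q1 by (metis add.commute le_Suc_ex)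
  have "2*(c0+s') + 2*g*q' + e*q' < m*c0" using A1 ss by simp
  then have "int (2*(c0+s') + 2*g*q' + e*q') < int (m*c0)" by (simp only: of_nat_less_iff)
  then have A1i: "2*(int c0+int s') + 2*int g*int q' + int e*int q' < int m*int c0" by simp
  have "m*(c0+s') < 2*c0 + p" using A2 ss by simp
  then have "int (m*(c0+s')) < int (2*c0 + p)" by (simp only: of_nat_less_iff)
  then have A2i: "int m*(int c0+int s') < 2*int c0 + int p" by simp
  show "m_sum_free_mod m p A"
    unfolding m_sum_free_mod_def
  proof (intro conjI ballI)
    show "A \<subseteq> {..<p}" unfolding A_def using p0 by auto
  next
    fix x y z assume xA: "x \<in> A" and yA: "y \<in> A" and zA: "z \<in> A"
    from xA obtain c1 k1 where x: "x = (c1 + g*k1) mod p" "c0 \<le> c1" "c1 < c0+s" "k1 < q"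
      unfolding A_def by auto
    from yA obtain c2 k2 where y: "y = (c2 + g*k2) mod p" "c0 \<le> c2" "c2 < c0+s" "k2 < q"
      unfolding A_def by auto
    from zA obtain c3 k3 where z: "z = (c3 + g*k3) mod p" "c0 \<le> c3" "c3 < c0+s" "k3 < q"
      unfolding A_def by auto
    define S where "S = int c1 + int c2 + int g * (int k1 + int k2)"
    define M where "M = int m * int c3 - int e * int k3"
    have "int ((x + y) mod p) = S mod int p"
      unfolding S_def x y by (simp add: zmod_int mod_add_eq algebra_simps)
    moreover have "int ((m*z) mod p) = M mod int p"
    proof -
      have "int ((m*z) mod p) = (int m * (int c3 + int g * int k3)) mod int p"
        unfolding z by (simp add: zmod_int mod_mult_right_eq)
      also have "int m * (int c3 + int g * int k3) = M + int p * int k3"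
        unfolding M_def using eq by (simp add: algebra_simps flip: of_nat_mult of_nat_add) (metis of_nat_add of_nat_mult distrib_right mult.commute mult.left_commute)
      also have "(M + int p * int k3) mod int p = M mod int p" by simp
      finally show ?thesis .
    qed
    moreover have "S < M"
    proof -
      have "S \<le> 2*(int c0 + int s - 1) + 2*int g*(int q - 1)"
      proof -
        have "int c1 + int c2 \<le> 2*(int c0 + int s - 1)" using x y by simp
        moreover have "int g * (int k1 + int k2) \<le> int g * (2*(int q - 1))"
          using x y by (intro mult_left_mono) auto
        ultimately show ?thesis unfolding S_def by (simp add: algebra_simps)
      qed
      moreover have "int m * int c0 - int e * (int q - 1) \<le> M"
      proof -
        have "int m * int c0 \<le> int m * int c3" using z by (intro mult_left_mono) auto
        moreover have "int e * int k3 \<le> int e * (int q - 1)" using z by (intro mult_left_mono) auto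
        ultimately show ?thesis unfolding M_def by linarith
      qed
      moreover have "2*(int c0 + int s - 1) + 2*int g*(int q - 1) + int e * (int q - 1) < int m * int c0"
        using A1i ss by simp
      ultimately show ?thesis by linarith
    qed
    moreover have "M < S + int p"
    proof -
      have "M \<le> int m * (int c0 + int s - 1)"
      proof -
        have "int m * int c3 \<le> int m * (int c0 + int s - 1)" using z by (intro mult_left_mono) auto
        moreover have "0 \<le> int e * int k3" by simp
        ultimately show ?thesis unfolding M_def by linarith
      qed
      moreover have "2 * int c0 \<le> S"
      proof -
        have "0 \<le> int g * (int k1 + int k2)" by simp
        moreover have "2 * int c0 \<le> int c1 + int c2" using x y by simp
        ultimately show ?thesis unfolding S_def by linarith
      qed
      moreover have "int m * (int c0 + int s - 1) < 2 * int c0 + int p" using A2i ss by simp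
      ultimately show ?thesis by linarith
    qed
    ultimately show "(x + y) mod p \<noteq> (m * z) mod p"
      using mod_neq_aux by (metis of_nat_eq_iff)
  qed
next
  obtain s' q' where ss: "s = s'+1" "q = q'+1" using s1 q1 by (metis add.commute le_Suc_ex)
  have inj: "inj_on (\<lambda>(c,k). (c + g*k) mod p) ({c0..<c0+s} \<times> {..<q})"
  proof (rule inj_onI, clarsimp)
    fix c k c' k' assume c: "c0 \<le> c" "c < c0+s" "k < q" and c': "c0 \<le> c'" "c' < c0+s" "k' < q"
      and e: "(c + g*k) mod p = (c' + g*k') mod p"
    have A4': "s' + g*q' < p" using A4 ss by simp
    have gk: "g*k \<le> g*q'" "g*k' \<le> g*q'" using c c' ss by auto
    have v: "c + g*k = c' + g*k'"
    proof (rule ccontr)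
      assume ne: "c + g*k \<noteq> c' + g*k'"
      show False
      proof (cases "c + g*k < c' + g*k'")
        case True
        have "c' + g*k' < c + g*k + p" using gk c c' A4' ss by linarith
        then have "int (c' + g*k') < int (c + g*k + p)" by (simp only: of_nat_less_iff)
        then have "int (c' + g*k') < int (c + g*k) + int p" by simp
        note h = this
        have lt: "int (c + g*k) < int (c' + g*k')" using True by (simp only: of_nat_less_iff)
        have "int (c + g*k) mod int p \<noteq> int (c' + g*k') mod int p"
          by (rule mod_neq_aux[OF lt h])
        then show False using e by (metis of_nat_mod)
      next
        case False
        then have F: "c' + g*k' < c + g*k" using ne by simp
        have "c + g*k < c' + g*k' + p" using gk c c' A4' ss by linarith
        then have "int (c + g*k) < int (c' + g*k' + p)" by (simp only: of_nat_less_iff)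
        then have "int (c + g*k) < int (c' + g*k') + int p" by simp
        note h = this
        have lt: "int (c' + g*k') < int (c + g*k)" using F by (simp only: of_nat_less_iff)
        have "int (c' + g*k') mod int p \<noteq> int (c + g*k) mod int p"
          by (rule mod_neq_aux[OF lt h])
        then show False using e by (metis of_nat_mod)
      qed
    qed
    have "k = k'"
    proof (rule ccontr)
      assume "k \<noteq> k'"
      then consider "k < k'" | "k' < k" by linarith
      then show False
      proof cases
        case 1
        then have "g*k + g \<le> g*k'" by (metis add.commute mult_Suc_right mult_le_mono2 Suc_leI)
        then show False using v c c' A3 by linarith
      next
        case 2
        then have "g*k' + g \<le> g*k" by (metis add.commute mult_Suc_right mult_le_mono2 Suc_leI)
        then show False using v c c' A3 by linarith
      qed
    qed
    then show "c = c' \<and> k = k'" using v by simp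
  qed
  show "card A = q*s" unfolding A_def using card_image[OF inj] by (simp add: card_cartesian_product)
qed

lemma exists_A:
  fixes m p g e q R :: nat
  assumes m7: "m \<ge> 7" and eq: "m*g + e = p" and el: "e \<le> m" and g1: "g \<ge> 1" and q1: "q \<ge> 1"
    and Rdef: "R + 2*g*(q-1) + e*(q-1) + (m - 1) = p"
  shows "\<exists>A s. m_sum_free_mod m p A \<and> card A = q*s \<and> R < (m+2)*s"
proof -
  define s1 where "s1 = R div (m+2)"
  define T where "T = 2*s1 + 2*g*(q-1) + e*(q-1)"
  define c0 where "c0 = T div (m-2) + 1"
  have d1: "(m+2)*s1 + R mod (m+2) = R" unfolding s1_def by (metis div_mult_mod_eq mult.commute)
  have d1': "R mod (m+2) < m+2" by simp
  have f1: "(m+2)*s1 \<le> R" "R < (m+2)*s1 + (m+2)" using d1 d1' by linarith+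
  have d2: "(m-2)*(T div (m-2)) + T mod (m-2) = T" by (metis div_mult_mod_eq mult.commute)
  have d2': "T mod (m-2) < m-2" using m7 by simp
  have cc: "(m-2)*c0 = (m-2)*(T div (m-2)) + (m-2)" unfolding c0_def by simp
  have f2: "T < (m-2)*c0" "(m-2)*c0 \<le> T + (m-2)" using d2 d2' cc by linarith+
  have mc0: "m*c0 = (m-2)*c0 + 2*c0" using m7 by (simp add: algebra_simps)
  have ms: "(m+2)*s1 = m*s1 + 2*s1" by (simp add: algebra_simps)
  have "m_sum_free_mod m p ((\<lambda>(c,k). (c + g*k) mod p) ` ({c0..<c0+(s1+1)} \<times> {..<q})) \<and>
        card ((\<lambda>(c,k). (c + g*k) mod p) ` ({c0..<c0+(s1+1)} \<times> {..<q})) = q*(s1+1)"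
  proof (rule construct[OF eq])
    show "2*(c0+(s1+1)-1) + 2*g*(q-1) + e*(q-1) < m*c0" using f2 mc0 unfolding T_def by simp
    show "m*(c0+(s1+1)-1) < 2*c0 + p"
    proof -
      have "m*(c0+(s1+1)-1) = m*c0 + m*s1" by (simp add: algebra_simps)
      then show ?thesis using f1 f2 mc0 ms Rdef m7 unfolding T_def by linarith
    qed
    show "s1 + 1 \<le> g"
    proof (rule ccontr)
      assume "\<not> s1 + 1 \<le> g"
      then have "g \<le> s1" by simp
      then have "(m+2)*g \<le> (m+2)*s1" by (rule mult_left_mono) simp
      moreover have "(m+2)*g = m*g + 2*g" by (simp add: algebra_simps)
      ultimately show False using f1 Rdef eq el g1 m7 by linarith
    qed
    show "s1 + 1 - 1 + g*(q-1) < p" using f1 ms Rdef m7 by simp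
  qed (use q1 in auto)
  then show ?thesis using f1 by (intro exI[of _ "(\<lambda>(c,k). (c + g*k) mod p) ` ({c0..<c0+(s1+1)} \<times> {..<q})"] exI[of _ "s1+1"]) (auto simp: algebra_simps)
qed

lemma d_mod_ge:
  assumes "m_sum_free_mod m p A" "p > 0"
  shows "d_mod m p \<ge> real (card A) / real p"
proof -
  have "{A. m_sum_free_mod m p A} \<subseteq> Pow {..<p}" unfolding m_sum_free_mod_def by auto
  then have "finite {A. m_sum_free_mod m p A}" by (rule finite_subset) simp
  then show ?thesis unfolding d_mod_def using assms by (intro Max_ge) auto
qed

lemma key8:
  fixes m q :: nat
  assumes "q = (m+2) div 4"
  shows "8*int q*(int m+2-2*int q) \<ge> int m*(int m+2) + 8*int q - 3"
proof -
  define b where "b = (m+2) mod 4"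
  have mb: "int m + 2 = 4*int q + int b" unfolding b_def assms
    by (metis div_mult_mod_eq mult.commute of_nat_add of_nat_mult of_nat_numeral)
  have "b < 4" unfolding b_def by simp
  then have "int b * int b - 2 * int b \<le> 3"
    by (cases b; cases "b - 1"; cases "b - 2"; cases "b - 3") (auto simp: algebra_simps)
  moreover have "8*int q*(int m+2-2*int q) - int m*(int m+2) = 8*int q - int b * int b + 2*int b"
  proof -
    have e: "int m = 4*int q + int b - 2" using mb by linarith
    have "\<And>M Q B::int. M = 4*Q + B - 2 \<Longrightarrow> 8*Q*(M+2-2*Q) - M*(M+2) = 8*Q - B*B + 2*B"
      by algebra
    from this[OF e] show ?thesis .
  qed
  ultimately show ?thesis by linarith
qed

lemma part1:
  fixes m n p :: nat
  assumes m7: "m \<ge> 7" and n0: "n > 0" and pdef: "p = 4*m^2*n + 1"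
  shows "d_mod m p \<ge> (1/8) * (1 - 1 / real p)"
proof -
  define q where "q = (m+2) div 4"
  have q2: "q \<ge> 2" unfolding q_def using m7 by linarith
  have q4: "4*q \<le> m+2" unfolding q_def by linarith
  define g where "g = 4*m*n"
  define K where "K = 2*g*(q-1) + 1*(q-1) + (m - 1)"
  have Ki: "int K = 8*int m*int n*(int q - 1) + int q + int m - 2"
  proof -
    have "int (q-1) = int q - 1" "int (m-1) = int m - 1" using q2 m7 by auto
    then show ?thesis unfolding K_def g_def of_nat_add of_nat_mult by (simp add: algebra_simps)
  qed
  have pi: "int p = 4*int m*int m*int n + 1" unfolding pdef by (simp add: power2_eq_square)
  have n1: "int n \<ge> 1" using n0 by simp
  have "int K \<le> int p"
  proof -
    have a: "2*int m*int n*(4*(int q - 1)) \<le> 2*int m*int n*(int m - 2)"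
      using q4 by (intro mult_left_mono) auto
    have b: "int m * 1 \<le> int m * int n" using n1 by (intro mult_left_mono) auto
    have c: "0 \<le> int m * (int m * int n)" by simp
    have d: "int q \<le> int m" using q4 by simp
    show ?thesis unfolding Ki pi using a b c d m7 by (simp add: algebra_simps; linarith)
  qed
  then have KP: "K \<le> p" by simp
  define R where "R = p - K"
  have Rdef: "R + 2*g*(q-1) + 1*(q-1) + (m - 1) = p" unfolding R_def using KP K_def by simp
  have "m*g + 1 = p" unfolding g_def pdef by (simp add: power2_eq_square algebra_simps)
  from exists_A[OF m7 this _ _ _ Rdef] m7 q2 n0
  obtain A s where A: "m_sum_free_mod m p A" "card A = q*s" "R < (m+2)*s"
    unfolding g_def by auto
  have Ri: "int R = int p - int K" unfolding R_def using KP by simp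
  have Rs: "int R < (int m + 2) * int s" using A(3) by (metis of_nat_add of_nat_less_iff of_nat_mult of_nat_numeral)
  define X where "X = 8*int q*(int m+2-2*int q)"
  have X: "X \<ge> int m*(int m+2) + 8*int q - 3" unfolding X_def by (rule key8) (simp add: q_def)
  have id: "2*int q*int R = int m*int n*X - 2*int q*(int q + int m - 3)"
    unfolding Ri Ki pi X_def by (simp add: algebra_simps)
  have h1: "int m*int n*X \<ge> int m*int n*(int m*(int m+2) + 8*int q - 3)"
    using X by (intro mult_left_mono) auto
  have h2: "int m*int n*(8*int q - 3) \<ge> int m*1*(8*int q - 3)"
    using n1 q2 by (intro mult_left_mono mult_right_mono) auto
  have qm: "int q * int q \<le> int q * int m" using q4 m7 by (intro mult_left_mono) auto
  have h3: "int m*(8*int q - 3) \<ge> 2*int q*(int q + int m - 3)"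
  proof -
    have "int m * 1 \<le> int m * int q" using q2 by (intro mult_left_mono) auto
    then have "int q * int m \<ge> int m" by (simp add: mult.commute)
    then show ?thesis using qm by (simp add: algebra_simps)
  qed
  have main: "2*int q*int R \<ge> int m*int m*(int m+2)*int n"
  proof -
    have "int m*int n*(int m*(int m+2) + 8*int q - 3) = int m*int m*(int m+2)*int n + int m*int n*(8*int q - 3)"
      by (simp add: algebra_simps)
    then show ?thesis using id h1 h2 h3 by linarith
  qed
  have "2*int q*int R < 2*int q*((int m + 2) * int s)" using Rs q2 by simp
  then have "int m*int m*(int m+2)*int n < (int m+2) * (2*int q*int s)" using main by (simp add: algebra_simps)
  then have "int m*int m*int n < 2*int q*int s"
    using mult_less_cancel_left_pos[of "int m + 2" "int m*int m*int n" "2*int q*int s"]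
    by (simp add: mult.commute)
  then have "int (m*m*n) < int (2*q*s)" by simp
  then have "m*m*n < 2*q*s" by (simp only: of_nat_less_iff)
  then have "4*(m*m*n) < 4*(2*q*s)" by simp
  then have "p - 1 < 8 * card A" using A(2) pdef by (simp add: power2_eq_square algebra_simps)
  then have le: "real p - 1 \<le> 8 * real (card A)" using pdef
    by (metis (no_types, lifting) less_imp_le of_nat_1 of_nat_diff of_nat_le_iff of_nat_mult of_nat_numeral le_add2 add.commute)
  have "p > 0" using pdef by simp
  then have p0: "real p > 0" by simp
  have "(1/8) * (1 - 1 / real p) = ((real p - 1)/8) / real p" using p0 by (simp add: field_simps)
  also have "\<dots> \<le> real (card A) / real p" using le p0 by (intro divide_right_mono) auto
  also have "\<dots> \<le> d_mod m p" using d_mod_ge[OF A(1)] pdef by simp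
  finally show ?thesis .
qed



lemma part2:
  fixes m p :: nat
  assumes m7: "m \<ge> 7" and pb: "p \<ge> 8*m*m*((m+2) div 4)*((m+2) div 4)"
  shows "d_mod m p \<ge> 1/8"
proof -
  define q where "q = (m+2) div 4"
  have q2: "q \<ge> 2" unfolding q_def using m7 by linarith
  have q4: "4*q \<le> m+2" unfolding q_def by linarith
  define g where "g = p div m"
  define e where "e = p mod m"
  have eq: "m*g + e = p" unfolding g_def e_def by simp
  have el: "e \<le> m" unfolding e_def using m7 by (simp add: less_imp_le)
  have "8*m*m*q*q \<le> p" using pb unfolding q_def .
  then have "int (8*m*m*q*q) \<le> int p" by (simp only: of_nat_le_iff)
  then have Pb: "int p \<ge> 8*int m*int m*int q*int q" by simp
  have "1*1 \<le> m*q" using m7 q2 by (intro mult_le_mono) auto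
  then have "int 1 \<le> int (m*q)" by (simp only: of_nat_le_iff)
  then have mq: "int m * int q \<ge> 1" by simp
  have mm: "int m * 1 \<le> int m * int q" using q2 by (intro mult_left_mono) auto
  have mm2: "(int m * int q) * 1 \<le> (int m*int q)*(int m*int q)" using mq by (intro mult_left_mono) auto
  have "int m \<ge> 7" using m7 by simp
  moreover have "int m * int q * (int m * int q) = int m*int m*int q*int q" by (simp add: algebra_simps)
  ultimately have "int m \<le> int p" using mm mm2 Pb by linarith
  then have "p \<ge> m" by simp
  then have g1: "g \<ge> 1" unfolding g_def using m7 by (simp add: Suc_le_eq div_greater_zero_iff)
  define K where "K = 2*g*(q-1) + e*(q-1) + (m - 1)"
  have Ki: "int K = 2*int g*(int q - 1) + int e*(int q - 1) + int m - 1"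
  proof -
    have "int (q-1) = int q - 1" "int (m-1) = int m - 1" using q2 m7 by auto
    then show ?thesis unfolding K_def of_nat_add of_nat_mult by (simp add: algebra_simps)
  qed
  have eqi: "int m*int g + int e = int p" using eq by (metis of_nat_add of_nat_mult)
  have mg: "int m*int g \<le> int p" using eqi by simp
  have a1: "2*(int m*int g)*(int q - 1) \<le> 2*int p*(int q - 1)" using mg q2 by (intro mult_right_mono mult_left_mono) auto
  have a2: "int m*int e*(int q - 1) \<le> int m*int m*(int q - 1)" using el q2 by (intro mult_right_mono mult_left_mono) auto
  have MK: "int m*int K \<le> 2*int p*(int q - 1) + int m*int m*int q"
  proof -
    have "int m*int K = 2*(int m*int g)*(int q - 1) + int m*int e*(int q - 1) + int m*int m - int m"
      unfolding Ki by (simp add: algebra_simps)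
    moreover have "int m*int m*(int q - 1) = int m*int m*int q - int m*int m" by (simp add: algebra_simps)
    ultimately show ?thesis using a1 a2 m7 by linarith
  qed
  have b1: "int p*(2*int q) \<le> int p*(int m+2-2*int q)" using q4 by (intro mult_left_mono) auto
  have b2: "int p * 1 \<le> int p*(2*int q)" using q2 by (intro mult_left_mono) auto
  have b3: "int m*int m*int q * 1 \<le> int m*int m*int q*(8*int q)" using q2 by (intro mult_left_mono) auto
  have "int m*int K \<le> int m*int p"
  proof -
    have "int m*int p - (2*int p*(int q - 1) + int m*int m*int q) = int p*(int m+2-2*int q) - int m*int m*int q"
      by (simp add: algebra_simps)
    then show ?thesis using MK b1 b2 b3 Pb by linarith
  qed
  then have "int K \<le> int p" using mult_le_cancel_left_pos[of "int m" "int K" "int p"] m7 by simp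
  then have KP: "K \<le> p" by simp
  define R where "R = p - K"
  have Rdef: "R + 2*g*(q-1) + e*(q-1) + (m - 1) = p" unfolding R_def using KP K_def by simp
  from exists_A[OF m7 eq el g1 _ Rdef] q2
  obtain A s where A: "m_sum_free_mod m p A" "card A = q*s" "R < (m+2)*s" by auto
  have Ri: "int R = int p - int K" unfolding R_def using KP by simp
  have Rs: "int R < (int m + 2) * int s" using A(3) by (metis of_nat_add of_nat_less_iff of_nat_mult of_nat_numeral)
  define X where "X = 8*int q*(int m+2-2*int q)"
  have X: "X \<ge> int m*(int m+2) + 8*int q - 3" unfolding X_def by (rule key8) (simp add: q_def)
  have MR: "int m*int R \<ge> int p*(int m+2-2*int q) - int m*int m*int q"
    unfolding Ri using MK by (simp add: algebra_simps)
  have c1: "8*int q*(int m*int R) \<ge> 8*int q*(int p*(int m+2-2*int q) - int m*int m*int q)"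
    using MR q2 by (intro mult_left_mono) auto
  have c2: "int p * X \<ge> int p*(int m*(int m+2) + 8*int q - 3)" using X by (intro mult_left_mono) auto
  have c3: "int p * (8*int q - 3) \<ge> int p * 1" using q2 by (intro mult_left_mono) auto
  have main: "8*int q*(int m*int R) \<ge> int p * (int m*(int m+2))"
  proof -
    have "8*int q*(int p*(int m+2-2*int q) - int m*int m*int q) = int p * X - 8*int m*int m*int q*int q"
      unfolding X_def by (simp add: algebra_simps)
    moreover have "int p*(int m*(int m+2) + 8*int q - 3) = int p * (int m*(int m+2)) + int p * (8*int q - 3)"
      by (simp add: algebra_simps)
    ultimately show ?thesis using c1 c2 c3 Pb by linarith
  qed
  have "int m*int R < int m*((int m + 2) * int s)" by (rule mult_strict_left_mono[OF Rs]) (use m7 in simp)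
  note h = this
  have "8*int q*(int m*int R) < 8*int q*(int m*((int m + 2) * int s))"
    by (rule mult_strict_left_mono[OF h]) (use q2 in simp)
  note h2 = this
  have "int p * (int m*(int m+2)) < (int m*(int m+2)) * (8*int q*int s)"
  proof -
    have "8*int q*(int m*((int m + 2) * int s)) = int m*(int m+2)*(8*int q*int s)" by (simp add: algebra_simps)
    then show ?thesis using main h2 by linarith
  qed
  then have "int p < 8*int q*int s"
    using mult_less_cancel_left_pos[of "int m*(int m + 2)" "int p" "8*int q*int s"] m7
    by (simp add: mult.commute)
  then have "int p < int (8*q*s)" by simp
  then have "p < 8*card A" using A(2) by (simp only: of_nat_less_iff mult.assoc)
  then have le: "real p \<le> 8 * real (card A)" by linarith
  have p0: "real p > 0" using \<open>p \<ge> m\<close> m7 by simp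
  have "1/8 = (real p/8) / real p" using p0 by simp
  also have "\<dots> \<le> real (card A) / real p" using le p0 by (intro divide_right_mono) auto
  also have "\<dots> \<le> d_mod m p" using d_mod_ge[OF A(1)] p0 by simp
  finally show ?thesis .
qed

lemma primes_at_top_nontriv: "primes_at_top \<noteq> bot"
proof
  assume "primes_at_top = bot"
  then have "eventually (\<lambda>x. False) primes_at_top" by simp
  then have "eventually (\<lambda>x. x \<in> {p. prime p} \<longrightarrow> False) sequentially"
    unfolding primes_at_top_def eventually_inf_principal .
  then obtain N :: nat where "\<forall>n\<ge>N. \<not> prime n" unfolding eventually_sequentially by blast
  moreover obtain p where "prime p" "p > N" using bigger_prime by blast
  ultimately show False by auto
qed

theorem lemma3p1:
  fixes m :: nat
  assumes "m \<ge> 7"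
  shows "(\<forall>p n::nat. prime p \<and> n > 0 \<and> p = 4 * m^2 * n + 1 \<longrightarrow>
            d_mod m p \<ge> (1/8) * (1 - 1 / real p))
       \<and> (\<forall>L::real. (d_mod m \<longlongrightarrow> L) primes_at_top \<longrightarrow> L \<ge> 1/8)"
proof (intro conjI allI impI)
  fix p n :: nat
  assume "prime p \<and> n > 0 \<and> p = 4 * m^2 * n + 1"
  then show "d_mod m p \<ge> (1/8) * (1 - 1 / real p)" using part1[OF assms] by blast
next
  fix L :: real
  assume lim: "(d_mod m \<longlongrightarrow> L) primes_at_top"
  have "eventually (\<lambda>p. 1/8 \<le> d_mod m p) primes_at_top"
    unfolding primes_at_top_def eventually_inf_principal eventually_sequentially
    using part2[OF assms] by blast
  then show "L \<ge> 1/8" using tendsto_lowerbound[OF lim _ primes_at_top_nontriv] by blast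
qed
end
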